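(* Let $\widehat{\mathbf M}=(\hat{\mathbb X},\hat{\mathbb U},\mathbb Y,\hat x_0,\hat{\mathbf t},\hat h)$ and $\mathbf M=(\mathbb X,\mathbb U,\mathbb Y,x_0,\mathbf t,h)$ be gMDPs with $\widehat{\mathbf M}\preceq^\delta_0\mathbf M$ via relation $\mathcal R$, interface $\mathcal U_v$ and lifted kernel $\mathbb W_{\mathbf t}$, let $\psi$ be an scLTL formula with DFA $\mathcal A_\psi=(Q,q_0,\Sigma,F,\tau)$, and let $\mu:\hat{\mathbb X}\times Q\to\hat{\mathbb U}$ be a mapping. Let $V:\hat{\mathbb X}\times Q\to[0,1]$ and $V_{\|}:\hat{\mathbb X}\times\mathbb X\times Q\to[0,1]$ satisfy $V(\hat x,q)\le V_{\|}(\hat x,x,q)$ for all $(\hat x,x)\in\mathcal R$ and $q\in Q$. Then $$\mathbf T^\mu_\delta(V)(\hat x,q)\le\mathbf T^\mu(V_{\|})(\hat x,x,q)\qquad\forall(\hat x,x)\in\mathcal R,\ q\in Q,$$ where $\mathbf T^\mu_\delta$ is the $\delta$-robust operator with respect to $\widehat{\mathbf M}\otimes\mathcal A_\psi$ and $\mathbf T^\mu$ on the right is the Bellman operator with respect to $(\widehat{\mathbf M}\|_{\mathcal R}\mathbf M)\otimes\mathcal A_\psi$.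
   Context: A gMDP is $(\mathbb X,\mathbb U,\mathbb Y,x_0,\mathbf t,h)$ with Polish state/input spaces, output space $\mathbb Y$ with metric $\mathbf d_{\mathbb Y}$, initial state, stochastic kernel $\mathbf t(\cdot\mid x,u)$ and measurable output map $h$. $\widehat{\mathbf M}\preceq^\delta_\epsilon\mathbf M$ means there exist an interface $\mathcal U_v:\hat{\mathbb U}\times\hat{\mathbb X}\times\mathbb X\to\mathcal P(\mathbb U)$, a measurable relation $\mathcal R\subseteq\hat{\mathbb X}\times\mathbb X$ and a Borel kernel $\mathbb W_{\mathbf t}(\cdot\mid\hat u,\hat x,x)$ on $\hat{\mathbb X}\times\mathbb X$ with $(\hat x_0,x_0)\in\mathcal R$ and, for all $(\hat x,x)\in\mathcal R$: $\mathbf d_{\mathbb Y}(\hat h(\hat x),h(x))\le\epsilon$, and for all $\hat u$, $\mathbb W=\mathbb W_{\mathbf t}(\cdot\mid\hat u,\hat x,x)$ has marginals $\hat{\mathbf t}(\cdot\mid\hat x,\hat u)$ on $\hat{\mathbb X}$ and $\mathbf t(\cdot\mid x,\mathcal U_v(\hat u,\hat x,x))$ on $\mathbb X$, and $\mathbb W(\mathcal R)\ge1-\delta$. The coupling gMDP $\widehat{\mathbf M}\|_{\mathcal R}\mathbf M$ has state space $\hat{\mathbb X}\times\mathbb X$, input space $\hat{\mathbb U}$, initial state $(\hat x_0,x_0)$, kernel $\mathbb W_{\mathbf t}$ and output map $(\hat x,x)\mapsto h(x)$. $\Sigma=2^{\mathsf{AP}}$, $\mathsf L:\mathbb Y\to\Sigma$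 measurable labelling, $\mathcal A_\psi$ a DFA (accepting set $F$, transition $\tau:Q\times\Sigma\to Q$) for $\psi$. For a gMDP $\mathbf N$ with state space $\mathbb Z$, kernel $\mathbf t_{\mathbf N}$ and output map $h_{\mathbf N}$, the product $\mathbf N\otimes\mathcal A_\psi$ has states $\mathbb Z\times Q$ and kernel $\bar{\mathbf t}(dz'\times\{q'\}\mid z,q,u)=\mathbf 1_{\{q'\}}(\tau(q,\mathsf L(h_{\mathbf N}(z'))))\mathbf t_{\mathbf N}(dz'\mid z,u)$; its Bellman operator for an input map $\mu$ is $\mathbf T^\mu(V)(z,q)=\int\max\{\mathbf 1_F(q'),V(z',q')\}\bar{\mathbf t}(dz'\times\{q'\}\mid z,q,\mu)$ (on the coupling, the input $\mu(\hat x,q)$ depends only on the $\hat{\mathbb X}$-component). The $\delta$-robust operator is $\mathbf T^\mu_\delta(V)=\mathbf L(\mathbf T^\mu(V)-\delta)$ with $\mathbf L(r)=\min(1,\max(0,r))$. *)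

theory Defs
  imports "HOL-Probability.Probability"
begin

text \<open>A gMDP (X, U, Y, x0, t, h): states and inputs are Polish spaces (type class
  polish_space, with their Borel sigma-algebras), outputs live in a metric space.  The initial state is just an element.\<close>

definition gMDP :: "('x::polish_space \<Rightarrow> 'u::polish_space \<Rightarrow> 'x measure) \<Rightarrow> ('x \<Rightarrow> 'y::metric_space) \<Rightarrow> bool" where
  "gMDP t h \<longleftrightarrow>
     (\<lambda>(x, u). t x u) \<in> borel \<rightarrow>\<^sub>M prob_algebra borel \<and> h \<in> borel_measurable borel"

definition kernel_mix :: "('x \<Rightarrow> 'u \<Rightarrow> 'x measure) \<Rightarrow> 'x \<Rightarrow> 'u measure \<Rightarrow> 'x measure" where
  "kernel_mix t x \<nu> = \<nu> \<bind> (\<lambda>u. t x u)"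

definition approx_sim ::
  "real \<Rightarrow> real \<Rightarrow>
   ('xh::polish_space \<Rightarrow> 'uh::polish_space \<Rightarrow> 'xh measure) \<Rightarrow> ('xh \<Rightarrow> 'y::metric_space) \<Rightarrow> 'xh \<Rightarrow>
   ('x::polish_space \<Rightarrow> 'u::polish_space \<Rightarrow> 'x measure) \<Rightarrow> ('x \<Rightarrow> 'y) \<Rightarrow> 'x \<Rightarrow>
   ('uh \<Rightarrow> 'xh \<Rightarrow> 'x \<Rightarrow> 'u measure) \<Rightarrow> ('xh \<times> 'x) set \<Rightarrow>
   ('uh \<Rightarrow> 'xh \<Rightarrow> 'x \<Rightarrow> ('xh \<times> 'x) measure) \<Rightarrow> bool" where
  "approx_sim \<delta> \<epsilon> th hh xh0 t h x0 Uv R W \<longleftrightarrow>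
     R \<in> sets (borel \<Otimes>\<^sub>M borel) \<and>
     (\<lambda>(uh, xh, x). W uh xh x) \<in> borel \<rightarrow>\<^sub>M prob_algebra (borel \<Otimes>\<^sub>M borel) \<and>
     (\<forall>uh xh x. Uv uh xh x \<in> space (prob_algebra borel)) \<and>
     (xh0, x0) \<in> R \<and>
     (\<forall>xh x. (xh, x) \<in> R \<longrightarrow>
        dist (hh xh) (h x) \<le> \<epsilon> \<and>
        (\<forall>uh. distr (W uh xh x) borel fst = th xh uh \<and>
              distr (W uh xh x) borel snd = kernel_mix t x (Uv uh xh x) \<and>
              measure (W uh xh x) R \<ge> 1 - \<delta>))"

text \<open>Z is the (Borel) measurable state space of N. Product N \<otimes> A_psi: kernel on Z \<times> Q,
  bar_t(dz' \<times> {q'} | z, q, u) = 1_{q'}(tau(q, L(h_N z'))) t_N(dz' | z, u).\<close>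
definition prod_kernel ::
  "'z measure \<Rightarrow> ('z \<Rightarrow> 'u \<Rightarrow> 'z measure) \<Rightarrow> ('z \<Rightarrow> 'y) \<Rightarrow> ('y \<Rightarrow> 'ap set) \<Rightarrow> ('q \<Rightarrow> 'ap set \<Rightarrow> 'q) \<Rightarrow>
   'z \<Rightarrow> 'q \<Rightarrow> 'u \<Rightarrow> ('z \<times> 'q) measure" where
  "prod_kernel Z tN hN L \<tau> z q u =
     distr (tN z u) (Z \<Otimes>\<^sub>M count_space UNIV) (\<lambda>z'. (z', \<tau> q (L (hN z'))))"

definition bellman ::
  "'z measure \<Rightarrow> ('z \<Rightarrow> 'u \<Rightarrow> 'z measure) \<Rightarrow> ('z \<Rightarrow> 'y) \<Rightarrow> ('y \<Rightarrow> 'ap set) \<Rightarrow> ('q \<Rightarrow> 'ap set \<Rightarrow> 'q) \<Rightarrow> 'q set \<Rightarrow>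
   ('z \<Rightarrow> 'q \<Rightarrow> 'u) \<Rightarrow> ('z \<Rightarrow> 'q \<Rightarrow> real) \<Rightarrow> 'z \<Rightarrow> 'q \<Rightarrow> real" where
  "bellman Z tN hN L \<tau> F \<mu> V z q =
     (\<integral>(z', q'). max (indicator F q') (V z' q') \<partial>(prod_kernel Z tN hN L \<tau> z q (\<mu> z q)))"

definition clip01 :: "real \<Rightarrow> real" where
  "clip01 r = min 1 (max 0 r)"

definition robust_bellman ::
  "real \<Rightarrow> 'z measure \<Rightarrow> ('z \<Rightarrow> 'u \<Rightarrow> 'z measure) \<Rightarrow> ('z \<Rightarrow> 'y) \<Rightarrow> ('y \<Rightarrow> 'ap set) \<Rightarrow> ('q \<Rightarrow> 'ap set \<Rightarrow> 'q) \<Rightarrow> 'q set \<Rightarrow>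
   ('z \<Rightarrow> 'q \<Rightarrow> 'u) \<Rightarrow> ('z \<Rightarrow> 'q \<Rightarrow> real) \<Rightarrow> 'z \<Rightarrow> 'q \<Rightarrow> real" where
  "robust_bellman \<delta> Z tN hN L \<tau> F \<mu> V z q = clip01 (bellman Z tN hN L \<tau> F \<mu> V z q - \<delta>)"

definition coupling_kernel ::
  "('uh \<Rightarrow> 'xh \<Rightarrow> 'x \<Rightarrow> ('xh \<times> 'x) measure) \<Rightarrow> ('xh \<times> 'x) \<Rightarrow> 'uh \<Rightarrow> ('xh \<times> 'x) measure" where
  "coupling_kernel W = (\<lambda>(xh, x) uh. W uh xh x)"

definition coupling_output :: "('x \<Rightarrow> 'y) \<Rightarrow> ('xh \<times> 'x) \<Rightarrow> 'y" where
  "coupling_output h = (\<lambda>(xh, x). h x)"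

end

theory Submission
  imports Defs
begin

theorem lemma2:
  fixes th :: "'xh::polish_space \<Rightarrow> 'uh::polish_space \<Rightarrow> 'xh measure"
    and hh :: "'xh \<Rightarrow> 'y::metric_space" and xh0 :: 'xh
    and t :: "'x::polish_space \<Rightarrow> 'u::polish_space \<Rightarrow> 'x measure"
    and h :: "'x \<Rightarrow> 'y" and x0 :: 'x
    and Uv :: "'uh \<Rightarrow> 'xh \<Rightarrow> 'x \<Rightarrow> 'u measure"
    and R :: "('xh \<times> 'x) set"
    and W :: "'uh \<Rightarrow> 'xh \<Rightarrow> 'x \<Rightarrow> ('xh \<times> 'x) measure"
    and L :: "'y \<Rightarrow> 'ap::finite set"
    and \<tau> :: "'q::finite \<Rightarrow> 'ap set \<Rightarrow> 'q" and q0 :: 'q and F :: "'q set"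
    and \<mu> :: "'xh \<Rightarrow> 'q \<Rightarrow> 'uh"
    and V :: "'xh \<Rightarrow> 'q \<Rightarrow> real"
    and Vp :: "'xh \<Rightarrow> 'x \<Rightarrow> 'q \<Rightarrow> real"
    and \<delta> :: real
  assumes Mhat: "gMDP th hh"
    and M: "gMDP t h"
    and sim: "approx_sim \<delta> 0 th hh xh0 t h x0 Uv R W"
    and L_meas: "L \<in> borel \<rightarrow>\<^sub>M count_space UNIV"
    and V_range: "\<And>xh q. V xh q \<in> {0..1}"
    and Vp_range: "\<And>xh x q. Vp xh x q \<in> {0..1}"
    and V_meas: "(\<lambda>(xh, q). V xh q) \<in> borel_measurable (borel \<Otimes>\<^sub>M count_space UNIV)"
    and Vp_meas: "(\<lambda>((xh, x), q). Vp xh x q) \<in> borel_measurable ((borel \<Otimes>\<^sub>M borel) \<Otimes>\<^sub>M count_space UNIV)"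
    and V_le: "\<And>xh x q. (xh, x) \<in> R \<Longrightarrow> V xh q \<le> Vp xh x q"
  shows "\<forall>xh x q. (xh, x) \<in> R \<longrightarrow>
           robust_bellman \<delta> borel th hh L \<tau> F \<mu> V xh q
             \<le> bellman (borel \<Otimes>\<^sub>M borel) (coupling_kernel W) (coupling_output h) L \<tau> F
                  (\<lambda>(xh', x') q'. \<mu> xh' q') (\<lambda>(xh', x'). Vp xh' x') (xh, x) q"
proof (intro allI impI)
  fix xh x q assume xR: "(xh, x) \<in> R"
  define u where "u = \<mu> xh q"
  define Wm where "Wm = W u xh x"
  have simR: "R \<in> sets (borel \<Otimes>\<^sub>M borel)"
    and Wmeas: "(\<lambda>(uh, xh, x). W uh xh x) \<in> borel \<rightarrow>\<^sub>M prob_algebra (borel \<Otimes>\<^sub>M borel)"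
    and hR: "\<And>a b. (a, b) \<in> R \<Longrightarrow> dist (hh a) (h b) \<le> 0"
    and distr1: "distr Wm borel fst = th xh u"
    and mR: "measure Wm R \<ge> 1 - \<delta>"
    using sim xR unfolding approx_sim_def Wm_def by auto
  have "(\<lambda>(uh, xh, x). W uh xh x) (u, xh, x) \<in> space (prob_algebra (borel \<Otimes>\<^sub>M borel))"
    by (rule measurable_space[OF Wmeas]) simp
  hence Wsets: "sets Wm = sets (borel \<Otimes>\<^sub>M borel)" and Wprob: "prob_space Wm"
    unfolding Wm_def space_prob_algebra by (auto simp: space_prob_algebra)
  have thmeas: "(\<lambda>(x, u). th x u) \<in> borel \<rightarrow>\<^sub>M prob_algebra borel" and hhm: "hh \<in> borel_measurable borel"
    using Mhat unfolding gMDP_def by auto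
  have hm: "h \<in> borel_measurable borel" using M unfolding gMDP_def by auto
  have "(\<lambda>(x, u). th x u) (xh, u) \<in> space (prob_algebra borel)"
    by (rule measurable_space[OF thmeas]) simp
  hence thsets: "sets (th xh u) = sets borel" unfolding space_prob_algebra by auto
  have hh_eq: "\<And>a b. (a, b) \<in> R \<Longrightarrow> hh a = h b" using hR by simp
  interpret P: prob_space Wm by (rule Wprob)

  define G where "G = (\<lambda>(z'::'xh, q'). max (indicator F q') (V z' q') :: real)"
  have Gm: "G \<in> borel_measurable (borel \<Otimes>\<^sub>M count_space UNIV)"
    unfolding G_def using V_meas by measurable
  define G2 where "G2 = (\<lambda>(z'::'xh \<times> 'x, q'). max (indicator F q') ((\<lambda>(xh', x'). Vp xh' x') z' q') :: real)"
  have G2m: "G2 \<in> borel_measurable ((borel \<Otimes>\<^sub>M borel) \<Otimes>\<^sub>M count_space UNIV)"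
  proof -
    have "(\<lambda>((xh, x), q). Vp xh x q) = (\<lambda>(z'::'xh \<times> 'x, q'). (\<lambda>(xh', x'). Vp xh' x') z' q')"
      by (auto simp: fun_eq_iff)
    thus ?thesis unfolding G2_def using Vp_meas by (simp) measurable
  qed

  define f where "f = (\<lambda>p::'xh \<times> 'x. G (fst p, \<tau> q (L (hh (fst p)))))"
  define g where "g = (\<lambda>p::'xh \<times> 'x. G2 (p, \<tau> q (L (h (snd p)))))"
  have phi1: "(\<lambda>z'. (z', \<tau> q (L (hh z')))) \<in> th xh u \<rightarrow>\<^sub>M borel \<Otimes>\<^sub>M count_space UNIV"
    unfolding measurable_cong_sets[OF thsets refl] using hhm L_meas by measurable
  have fstm: "fst \<in> Wm \<rightarrow>\<^sub>M borel"
    unfolding measurable_cong_sets[OF Wsets refl] by measurable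
  have fm: "f \<in> borel_measurable Wm"
    unfolding f_def measurable_cong_sets[OF Wsets refl] using Gm hhm L_meas by measurable
  have gm: "g \<in> borel_measurable Wm"
    unfolding g_def measurable_cong_sets[OF Wsets refl] using G2m hm L_meas by measurable
  have LHS: "bellman borel th hh L \<tau> F \<mu> V xh q = (\<integral>p. f p \<partial>Wm)"
  proof -
    have "bellman borel th hh L \<tau> F \<mu> V xh q = (\<integral>z'. G (z', \<tau> q (L (hh z'))) \<partial>th xh u)"
      unfolding bellman_def prod_kernel_def u_def[symmetric] G_def[symmetric]
      by (rule integral_distr[OF phi1 Gm])
    also have "\<dots> = (\<integral>z'. G (z', \<tau> q (L (hh z'))) \<partial>distr Wm borel fst)"
      by (simp add: distr1)
    also have "\<dots> = (\<integral>p. f p \<partial>Wm)"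
      unfolding f_def
      by (rule integral_distr[OF fstm]) (use Gm hhm L_meas in measurable)
    finally show ?thesis .
  qed
  have RHS: "bellman (borel \<Otimes>\<^sub>M borel) (coupling_kernel W) (coupling_output h) L \<tau> F
                  (\<lambda>(xh', x') q'. \<mu> xh' q') (\<lambda>(xh', x'). Vp xh' x') (xh, x) q = (\<integral>p. g p \<partial>Wm)"
  proof -
    have phi2: "(\<lambda>z'. (z', \<tau> q (L (h (snd z'))))) \<in> Wm \<rightarrow>\<^sub>M (borel \<Otimes>\<^sub>M borel) \<Otimes>\<^sub>M count_space UNIV"
      unfolding measurable_cong_sets[OF Wsets refl] using hm L_meas by measurable
    have "bellman (borel \<Otimes>\<^sub>M borel) (coupling_kernel W) (coupling_output h) L \<tau> F
                  (\<lambda>(xh', x') q'. \<mu> xh' q') (\<lambda>(xh', x'). Vp xh' x') (xh, x) q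
       = (\<integral>p. G2 p \<partial>distr Wm ((borel \<Otimes>\<^sub>M borel) \<Otimes>\<^sub>M count_space UNIV) (\<lambda>z'. (z', \<tau> q (L (h (snd z'))))))"
      unfolding bellman_def prod_kernel_def G2_def coupling_kernel_def Wm_def u_def
      by (simp add: coupling_output_def split_def)
    also have "\<dots> = (\<integral>p. g p \<partial>Wm)"
      unfolding g_def by (rule integral_distr[OF phi2 G2m])
    finally show ?thesis .
  qed
  have f01: "f p \<in> {0..1}" for p
    using V_range unfolding f_def G_def by (auto simp: indicator_def)
  have g01: "g p \<in> {0..1}" for p
    using Vp_range unfolding g_def G2_def by (auto simp: indicator_def case_prod_beta)
  have fi: "integrable Wm f"
    by (rule P.integrable_const_bound[where B=1]) (use f01 fm in auto)
  have gi: "integrable Wm g"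
    by (rule P.integrable_const_bound[where B=1]) (use g01 gm in auto)
  have Rsets: "R \<in> sets Wm" using simR Wsets by simp
  have ci: "integrable Wm (indicator (space Wm - R) :: _ \<Rightarrow> real)"
    using Rsets by (intro integrable_real_indicator) (auto simp: less_top[symmetric])
  have pw: "f p \<le> g p + indicator (space Wm - R) p" if "p \<in> space Wm" for p
  proof (cases "p \<in> R")
    case True
    obtain a b where p: "p = (a, b)" by force
    have "hh a = h b" using True p hh_eq by simp
    then show ?thesis using True p V_le[of a b "\<tau> q (L (h b))"] unfolding f_def g_def G_def G2_def
      by (auto simp: indicator_def max_def)
  next
    case False
    then show ?thesis using that f01[of p] g01[of p] by (auto simp: indicator_def)
  qed
  have "(\<integral>p. f p \<partial>Wm) \<le> (\<integral>p. g p + indicator (space Wm - R) p \<partial>Wm)"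
    by (rule integral_mono[OF fi]) (use gi ci pw in auto)
  also have "\<dots> = (\<integral>p. g p \<partial>Wm) + measure Wm (space Wm - R)"
    using gi ci Rsets by (simp add: Bochner_Integration.integral_add)
  also have "measure Wm (space Wm - R) = 1 - measure Wm R"
    using P.prob_compl[OF Rsets] .
  finally have main: "(\<integral>p. f p \<partial>Wm) - \<delta> \<le> (\<integral>p. g p \<partial>Wm)" using mR by linarith
  have gnn: "0 \<le> (\<integral>p. g p \<partial>Wm)"
    using g01 by (simp add: Bochner_Integration.integral_nonneg)
  show "robust_bellman \<delta> borel th hh L \<tau> F \<mu> V xh q
             \<le> bellman (borel \<Otimes>\<^sub>M borel) (coupling_kernel W) (coupling_output h) L \<tau> F
                  (\<lambda>(xh', x') q'. \<mu> xh' q') (\<lambda>(xh', x'). Vp xh' x') (xh, x) q"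
    unfolding robust_bellman_def LHS RHS clip01_def using main gnn by linarith
qed

end
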